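(* Let $X=\{1,\dots,n\}$, $Y$ finite, $Q$ a symmetric irreducible stochastic matrix on $Y$ (notation in context). Let $\underline a=(a_0,\dots,a_m)$ be a type with $a_0+\cdots+a_m=h$, and let $k$ be an integer with $\ell(\underline a)\le k\le\frac{n+\ell(\underline a)}{2}$ and $k\le h\le n+\ell(\underline a)-k$. Write $\underline a^{(r)}=(a_0-r,a_1,\dots,a_m)$. Then for every $F\in P_{k,\underline a^{(h-k)},k}$, $$\big\|D^*_{h,\underline a}D^*_{h-1,\underline a^{(1)}}\cdots D^*_{k+1,\underline a^{(h-k-1)}}F\big\|^2=\frac{(n+\ell(\underline a)-2k)!\,(h-k)!}{(n+\ell(\underline a)-k-h)!}\,|Y|^{h-k}\,\|F\|^2 .$$ In particular $D^*_{h,\underline a}D^*_{h-1,\underline a^{(1)}}\cdots D^*_{k+1,\underline a^{(h-k-1)}}$ is an isomorphism of $P_{k,\underline a^{(h-k)},k}$ onto $P_{h,\underline a,k}$.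
   Context: $Q$ acts on $L(Y)$ by $(Qf)(y)=\sum_{y'}q(y,y')f(y')$, with distinct eigenvalues $\lambda_0=1,\dots,\lambda_m$ and eigenspaces $W_0$ (constants), $W_1,\dots,W_m$. For $0\le k\le n$, $\Theta_k$ is the set of functions $\theta$ with $\mathrm{dom}(\theta)$ a $k$-subset of $X$ and values in $Y$ ($\Theta_0$ = empty function), with inner product $\langle F,G\rangle=\sum_{\theta\in\Theta_k}F(\theta)\overline{G(\theta)}$ on $L(\Theta_k)$ and norm $\|F\|^2=\langle F,F\rangle$; $\varphi\subseteq\theta$ means $\mathrm{dom}\varphi\subseteq\mathrm{dom}\theta$ and $\theta|_{\mathrm{dom}\varphi}=\varphi$. For $1\le k\le n$: $(D_kF)(\varphi)=\sum_{\theta\in\Theta_k:\theta\supseteq\varphi}F(\theta)$ and $(D_k^*F)(\theta)=\sum_{\varphi\in\Theta_{k-1}:\varphi\subseteq\theta}F(\varphi)$; $D_0:=0$. Types $\underline c=(c_0,\dots,c_m)$, $|\underline c|=\sum c_i$, $\ell(\underline c)=c_1+\cdots+c_m$, $\underline c'=(c_0-1,c_1,\dots,c_m)$. A fundamental function of type $\underline c$ on $A$, $|A|=|\underline c|$, is $F=\bigotimes_{j\in A}F^j$ ($F(\theta)=\prod_{j\in A}F^j(\theta(j))$ on $Y^A$, $0$ elsewhere) with each $F^j$ in some $W_{i_j}$ and exactly $c_i$ indices with $i_j=i$; $P_{k,\underline c,A}$ is their span, $P_{k,\underline c}=\bigoplus_{|A|=k}P_{k,\underline c,A}$. $D_{k,\underline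 c}=D_k|_{P_{k,\underline c}}$, $D^*_{k,\underline c}=D^*_k|_{P_{k-1,\underline c'}}$. For $|\underline c|=k$: $P_{k,\underline c,k}=\ker D_{k,\underline c}$; for $k<h\le n$, $|\underline c|=h$, $\ell(\underline c)\le k$: $P_{h,\underline c,k}=D^*_{h,\underline c}(P_{h-1,\underline c',k})$. For $h=k$ the composition of the $D^*$'s is the identity. *)

theory Defs
  imports Complex_Main
begin

text \<open>Setting: X = {1..n}, Y = the finite type 'y, Q given by q :: 'y => 'y => real.
Functions in L(Y), L(Theta_k) are complex valued.\<close>

definition stochastic_sym_irred :: "('y::finite \<Rightarrow> 'y \<Rightarrow> real) \<Rightarrow> bool" where
  "stochastic_sym_irred q \<longleftrightarrow>
     (\<forall>y y'. q y y' \<ge> 0) \<and> (\<forall>y. (\<Sum>y'\<in>UNIV. q y y') = 1) \<and>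
     (\<forall>y y'. q y y' = q y' y) \<and>
     (\<forall>y y'. (y, y') \<in> {(u, v). q u v > 0}\<^sup>*)"

definition Qop :: "('y::finite \<Rightarrow> 'y \<Rightarrow> real) \<Rightarrow> ('y \<Rightarrow> complex) \<Rightarrow> 'y \<Rightarrow> complex" where
  "Qop q f = (\<lambda>y. \<Sum>y'\<in>UNIV. complex_of_real (q y y') * f y')"

definition eigen_enum :: "('y::finite \<Rightarrow> 'y \<Rightarrow> real) \<Rightarrow> nat \<Rightarrow> (nat \<Rightarrow> real) \<Rightarrow> bool" where
  "eigen_enum q m lam \<longleftrightarrow> lam 0 = 1 \<and> inj_on lam {..m} \<and>
     (\<forall>\<mu>::complex. (\<exists>f. f \<noteq> (\<lambda>_. 0) \<and> Qop q f = (\<lambda>y. \<mu> * f y))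
                    \<longleftrightarrow> \<mu> \<in> complex_of_real ` lam ` {..m})"

definition W :: "('y::finite \<Rightarrow> 'y \<Rightarrow> real) \<Rightarrow> (nat \<Rightarrow> real) \<Rightarrow> nat \<Rightarrow> ('y \<Rightarrow> complex) set" where
  "W q lam i = {f. Qop q f = (\<lambda>y. complex_of_real (lam i) * f y)}"

definition Theta :: "nat \<Rightarrow> nat \<Rightarrow> (nat \<rightharpoonup> 'y::finite) set" where
  "Theta n k = {\<theta>. dom \<theta> \<subseteq> {1..n} \<and> card (dom \<theta>) = k}"

definition normsq :: "nat \<Rightarrow> nat \<Rightarrow> ((nat \<rightharpoonup> 'y::finite) \<Rightarrow> complex) \<Rightarrow> real" where
  "normsq n k F = (\<Sum>\<theta>\<in>Theta n k. (cmod (F \<theta>))\<^sup>2)"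

definition Dop :: "nat \<Rightarrow> nat \<Rightarrow> ((nat \<rightharpoonup> 'y::finite) \<Rightarrow> complex) \<Rightarrow> (nat \<rightharpoonup> 'y) \<Rightarrow> complex" where
  "Dop n k F = (\<lambda>\<phi>. if k = 0 then 0 else if \<phi> \<in> Theta n (k - 1)
       then (\<Sum>\<theta>\<in>{\<theta>\<in>Theta n k. \<phi> \<subseteq>\<^sub>m \<theta>}. F \<theta>) else 0)"

definition Dstar :: "nat \<Rightarrow> nat \<Rightarrow> ((nat \<rightharpoonup> 'y::finite) \<Rightarrow> complex) \<Rightarrow> (nat \<rightharpoonup> 'y) \<Rightarrow> complex" where
  "Dstar n k F = (\<lambda>\<theta>. if \<theta> \<in> Theta n k
       then (\<Sum>\<phi>\<in>{\<phi>\<in>Theta n (k - 1). \<phi> \<subseteq>\<^sub>m \<theta>}. F \<phi>) else 0)"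

definition cspan :: "('a \<Rightarrow> complex) set \<Rightarrow> ('a \<Rightarrow> complex) set" where
  "cspan S = {F. \<exists>T u. finite T \<and> T \<subseteq> S \<and> F = (\<lambda>x. \<Sum>G\<in>T. u G * G x)}"

text \<open>Types are c :: nat => nat, only the entries c 0, ..., c m matter.\<close>
definition type_size :: "nat \<Rightarrow> (nat \<Rightarrow> nat) \<Rightarrow> nat" where
  "type_size m c = (\<Sum>i\<le>m. c i)"

definition type_ell :: "nat \<Rightarrow> (nat \<Rightarrow> nat) \<Rightarrow> nat" where
  "type_ell m c = (\<Sum>i=1..m. c i)"

definition type_shift :: "nat \<Rightarrow> (nat \<Rightarrow> nat) \<Rightarrow> nat \<Rightarrow> nat" where
  "type_shift r c = c(0 := c 0 - r)"

definition fundamental ::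
  "('y::finite \<Rightarrow> 'y \<Rightarrow> real) \<Rightarrow> nat \<Rightarrow> (nat \<Rightarrow> real) \<Rightarrow> (nat \<Rightarrow> nat) \<Rightarrow> nat set
    \<Rightarrow> ((nat \<rightharpoonup> 'y) \<Rightarrow> complex) \<Rightarrow> bool" where
  "fundamental q m lam c A F \<longleftrightarrow>
     (\<exists>Fj :: nat \<Rightarrow> 'y \<Rightarrow> complex. \<exists>ii :: nat \<Rightarrow> nat.
        (\<forall>j\<in>A. ii j \<le> m \<and> Fj j \<in> W q lam (ii j)) \<and>
        (\<forall>i\<le>m. card {j\<in>A. ii j = i} = c i) \<and>
        F = (\<lambda>\<theta>. if dom \<theta> = A then (\<Prod>j\<in>A. Fj j (the (\<theta> j))) else 0))"

definition Pkc ::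
  "('y::finite \<Rightarrow> 'y \<Rightarrow> real) \<Rightarrow> nat \<Rightarrow> (nat \<Rightarrow> real) \<Rightarrow> nat \<Rightarrow> nat \<Rightarrow> (nat \<Rightarrow> nat)
    \<Rightarrow> ((nat \<rightharpoonup> 'y) \<Rightarrow> complex) set" where
  "Pkc q m lam n k c = cspan (\<Union>A\<in>{A. A \<subseteq> {1..n} \<and> card A = k}. {F. fundamental q m lam c A F})"

text \<open>PP d c k = P_{k+d, c, k}.\<close>
fun PP ::
  "('y::finite \<Rightarrow> 'y \<Rightarrow> real) \<Rightarrow> nat \<Rightarrow> (nat \<Rightarrow> real) \<Rightarrow> nat \<Rightarrow> nat \<Rightarrow> (nat \<Rightarrow> nat) \<Rightarrow> nat
    \<Rightarrow> ((nat \<rightharpoonup> 'y) \<Rightarrow> complex) set" where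
  "PP q m lam n 0 c k = {F \<in> Pkc q m lam n k c. Dop n k F = (\<lambda>_. 0)}"
| "PP q m lam n (Suc d) c k = Dstar n (k + Suc d) ` PP q m lam n d (type_shift 1 c) k"

definition Pspace where
  "Pspace q m lam n h c k = PP q m lam n (h - k) c k"

fun DstarIter :: "nat \<Rightarrow> nat \<Rightarrow> nat \<Rightarrow> ((nat \<rightharpoonup> 'y::finite) \<Rightarrow> complex) \<Rightarrow> (nat \<rightharpoonup> 'y) \<Rightarrow> complex" where
  "DstarIter n k 0 F = F"
| "DstarIter n k (Suc d) F = Dstar n (k + Suc d) (DstarIter n k d F)"

end

theory Submission imports Defs begin

lemma finite_Theta: "finite (Theta n k :: (nat \<rightharpoonup> 'y::finite) set)"
proof -
  have "Theta n k \<subseteq> (\<Union>A\<in>Pow {1..n}. {m :: nat \<rightharpoonup> 'y. dom m = A \<and> ran m \<subseteq> UNIV})"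
    by (auto simp: Theta_def)
  moreover have "finite (\<Union>A\<in>Pow {1..n}. {m :: nat \<rightharpoonup> 'y. dom m = A \<and> ran m \<subseteq> UNIV})"
    by (intro finite_UN_I finite_set_of_finite_maps) (auto intro: finite_subset)
  ultimately show ?thesis by (rule finite_subset)
qed

lemma Theta_finite_dom: "\<theta> \<in> Theta n k \<Longrightarrow> finite (dom \<theta>)"
  by (auto simp: Theta_def intro: finite_subset)

lemma Theta_del: assumes "\<theta> \<in> Theta n (Suc j)" "z \<in> dom \<theta>" shows "\<theta>(z:=None) \<in> Theta n j"
  using assms Theta_finite_dom[OF assms(1)] by (auto simp: Theta_def)

lemma Theta_add: assumes "\<psi> \<in> Theta n j" "x \<in> {1..n} - dom \<psi>" shows "\<psi>(x\<mapsto>y) \<in> Theta n (Suc j)"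
  using assms Theta_finite_dom[OF assms(1)] by (auto simp: Theta_def)

lemma Theta_upd: assumes "\<psi> \<in> Theta n j" "x \<in> dom \<psi>" shows "\<psi>(x\<mapsto>y) \<in> Theta n j"
  using assms by (auto simp: Theta_def insert_absorb)

lemma Dstar_eq:
  assumes th: "\<theta> \<in> Theta n (Suc j)"
  shows "Dstar n (Suc j) G \<theta> = (\<Sum>z\<in>dom \<theta>. G (\<theta>(z:=None)))"
proof -
  have fin: "finite (dom \<theta>)" using Theta_finite_dom[OF th] .
  have cardth: "card (dom \<theta>) = Suc j" using th by (auto simp: Theta_def)
  have single: "\<exists>z. dom \<theta> - dom \<phi> = {z}" if "\<phi> \<in> {\<phi>\<in>Theta n j. \<phi> \<subseteq>\<^sub>m \<theta>}" for \<phi>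
  proof -
    from that have sub: "dom \<phi> \<subseteq> dom \<theta>" and c: "card (dom \<phi>) = j"
      by (auto simp: Theta_def map_le_implies_dom_le)
    have "card (dom \<theta> - dom \<phi>) = 1" using card_Diff_subset[OF finite_subset[OF sub fin] sub] c cardth by simp
    thus ?thesis by (simp add: card_1_singleton_iff)
  qed
  define jj where "jj \<phi> = (SOME z. dom \<theta> - dom \<phi> = {z})" for \<phi> :: "nat \<rightharpoonup> 'a"
  have jj: "dom \<theta> - dom \<phi> = {jj \<phi>}" if "\<phi> \<in> {\<phi>\<in>Theta n j. \<phi> \<subseteq>\<^sub>m \<theta>}" for \<phi>
    using single[OF that] unfolding jj_def by (rule someI_ex)
  have eq: "\<theta>(jj \<phi> := None) = \<phi>" if "\<phi> \<in> {\<phi>\<in>Theta n j. \<phi> \<subseteq>\<^sub>m \<theta>}" for \<phi>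
  proof
    fix x
    have sub: "dom \<phi> \<subseteq> dom \<theta>" and le: "\<phi> \<subseteq>\<^sub>m \<theta>" using that by (auto simp: map_le_implies_dom_le)
    show "(\<theta>(jj \<phi> := None)) x = \<phi> x"
    proof (cases "x \<in> dom \<phi>")
      case True
      then show ?thesis using jj[OF that] le by (auto simp: map_le_def)
    next
      case False
      then show ?thesis using jj[OF that] by (cases "x = jj \<phi>") (auto simp: domIff)
    qed
  qed
  have "Dstar n (Suc j) G \<theta> = (\<Sum>\<phi>\<in>{\<phi>\<in>Theta n j. \<phi> \<subseteq>\<^sub>m \<theta>}. G \<phi>)"
    using th by (simp add: Dstar_def)
  also have "\<dots> = (\<Sum>z\<in>dom \<theta>. G (\<theta>(z:=None)))"
  proof (rule sum.reindex_bij_witness[where i="\<lambda>z. \<theta>(z:=None)" and j=jj])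
    fix \<phi> assume a: "\<phi> \<in> {\<phi>\<in>Theta n j. \<phi> \<subseteq>\<^sub>m \<theta>}"
    show "\<theta>(jj \<phi> := None) = \<phi>" using eq[OF a] .
    show "jj \<phi> \<in> dom \<theta>" using jj[OF a] by blast
    show "G (\<theta>(jj \<phi> := None)) = G \<phi>" using eq[OF a] by simp
  next
    fix z assume z: "z \<in> dom \<theta>"
    show "\<theta>(z:=None) \<in> {\<phi>\<in>Theta n j. \<phi> \<subseteq>\<^sub>m \<theta>}"
      using Theta_del[OF th z] by (auto simp: map_le_def)
    hence "dom \<theta> - dom (\<theta>(z:=None)) = {jj (\<theta>(z:=None))}" by (rule jj)
    moreover have "dom \<theta> - dom (\<theta>(z:=None)) = {z}" using z by auto
    ultimately show "jj (\<theta>(z:=None)) = z" by simp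
  qed
  finally show ?thesis .
qed

lemma Dop_eq:
  assumes ph: "\<phi> \<in> Theta n j"
  shows "Dop n (Suc j) G \<phi> = (\<Sum>x\<in>{1..n} - dom \<phi>. \<Sum>y\<in>UNIV. G (\<phi>(x\<mapsto>y)))"
proof -
  have fin: "finite (dom \<phi>)" using Theta_finite_dom[OF ph] .
  have cardph: "card (dom \<phi>) = j" and subn: "dom \<phi> \<subseteq> {1..n}" using ph by (auto simp: Theta_def)
  have single: "\<exists>z. dom \<theta> - dom \<phi> = {z}" if "\<theta> \<in> {\<theta>\<in>Theta n (Suc j). \<phi> \<subseteq>\<^sub>m \<theta>}" for \<theta>
  proof -
    from that have sub: "dom \<phi> \<subseteq> dom \<theta>" and c: "card (dom \<theta>) = Suc j" and f: "finite (dom \<theta>)"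
      by (auto simp: Theta_def map_le_implies_dom_le intro: finite_subset)
    have "card (dom \<theta> - dom \<phi>) = 1" using card_Diff_subset[OF fin sub] c cardph by simp
    thus ?thesis by (simp add: card_1_singleton_iff)
  qed
  define jj where "jj \<theta> = (SOME z. dom \<theta> - dom \<phi> = {z})" for \<theta> :: "nat \<rightharpoonup> 'a"
  have jj: "dom \<theta> - dom \<phi> = {jj \<theta>}" if "\<theta> \<in> {\<theta>\<in>Theta n (Suc j). \<phi> \<subseteq>\<^sub>m \<theta>}" for \<theta>
    using single[OF that] unfolding jj_def by (rule someI_ex)
  have eq: "\<phi>(jj \<theta> \<mapsto> the (\<theta> (jj \<theta>))) = \<theta>" if a: "\<theta> \<in> {\<theta>\<in>Theta n (Suc j). \<phi> \<subseteq>\<^sub>m \<theta>}" for \<theta>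
  proof
    fix x
    have le: "\<phi> \<subseteq>\<^sub>m \<theta>" and sub: "dom \<phi> \<subseteq> dom \<theta>" using a by (auto simp: map_le_implies_dom_le)
    show "(\<phi>(jj \<theta> \<mapsto> the (\<theta> (jj \<theta>)))) x = \<theta> x"
    proof (cases "x = jj \<theta>")
      case True
      have "jj \<theta> \<in> dom \<theta>" using jj[OF a] by blast
      then show ?thesis using True by auto
    next
      case False
      show ?thesis
      proof (cases "x \<in> dom \<phi>")
        case True then show ?thesis using False le by (auto simp: map_le_def)
      next
        case nd: False
        then have "x \<notin> dom \<theta>" using jj[OF a] False by auto
        then show ?thesis using False nd by (auto simp: domIff)
      qed
    qed
  qed
  have "Dop n (Suc j) G \<phi> = (\<Sum>\<theta>\<in>{\<theta>\<in>Theta n (Suc j). \<phi> \<subseteq>\<^sub>m \<theta>}. G \<theta>)"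
    using ph by (simp add: Dop_def)
  also have "\<dots> = (\<Sum>p\<in>({1..n} - dom \<phi>) \<times> UNIV. G (\<phi>(fst p \<mapsto> snd p)))"
  proof (rule sum.reindex_bij_witness[where i="\<lambda>p. \<phi>(fst p \<mapsto> snd p)" and j="\<lambda>\<theta>. (jj \<theta>, the (\<theta> (jj \<theta>)))"])
    fix \<theta> assume a: "\<theta> \<in> {\<theta>\<in>Theta n (Suc j). \<phi> \<subseteq>\<^sub>m \<theta>}"
    show "\<phi>(fst (jj \<theta>, the (\<theta> (jj \<theta>))) \<mapsto> snd (jj \<theta>, the (\<theta> (jj \<theta>)))) = \<theta>" using eq[OF a] by simp
    then show "G (\<phi>(fst (jj \<theta>, the (\<theta> (jj \<theta>))) \<mapsto> snd (jj \<theta>, the (\<theta> (jj \<theta>))))) = G \<theta>" by simp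
    have "dom \<theta> \<subseteq> {1..n}" using a by (auto simp: Theta_def)
    moreover have "jj \<theta> \<in> dom \<theta> - dom \<phi>" using jj[OF a] by blast
    ultimately show "(jj \<theta>, the (\<theta> (jj \<theta>))) \<in> ({1..n} - dom \<phi>) \<times> UNIV" by blast
  next
    fix p assume p: "p \<in> ({1..n} - dom \<phi>) \<times> (UNIV :: 'a set)"
    obtain x y where pxy: "p = (x, y)" by (cases p)
    have x: "x \<in> {1..n} - dom \<phi>" using p pxy by auto
    have mem: "\<phi>(x\<mapsto>y) \<in> {\<theta>\<in>Theta n (Suc j). \<phi> \<subseteq>\<^sub>m \<theta>}"
      using Theta_add[OF ph x] x by (auto simp: map_le_def)
    then show "\<phi>(fst p \<mapsto> snd p) \<in> {\<theta>\<in>Theta n (Suc j). \<phi> \<subseteq>\<^sub>m \<theta>}" using pxy by simp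
    have "dom (\<phi>(x\<mapsto>y)) - dom \<phi> = {x}" using x by auto
    with jj[OF mem] have "jj (\<phi>(x\<mapsto>y)) = x" by simp
    then show "(jj (\<phi>(fst p \<mapsto> snd p)), the ((\<phi>(fst p \<mapsto> snd p)) (jj (\<phi>(fst p \<mapsto> snd p))))) = p"
      using pxy by simp
  qed
  also have "\<dots> = (\<Sum>x\<in>{1..n} - dom \<phi>. \<Sum>y\<in>UNIV. G (\<phi>(x\<mapsto>y)))"
    by (simp add: sum.cartesian_product split_beta)
  finally show ?thesis .
qed

definition EP :: "nat \<Rightarrow> nat \<Rightarrow> nat \<Rightarrow> ((nat \<rightharpoonup> 'y::finite) \<Rightarrow> complex) \<Rightarrow> bool" where
  "EP n j c0 G \<longleftrightarrow> (\<forall>\<psi>\<in>Theta n j.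
     (\<Sum>z\<in>dom \<psi>. \<Sum>y\<in>UNIV. G (\<psi>(z\<mapsto>y))) = of_nat (c0 * card (UNIV :: 'y set)) * G \<psi>)"

lemma DSD:
  assumes ps: "\<psi> \<in> Theta n j"
  shows "Dstar n j (Dop n j G) \<psi> =
    (\<Sum>z\<in>dom \<psi>. \<Sum>x\<in>{1..n} - (dom \<psi> - {z}). \<Sum>y\<in>UNIV. G ((\<psi>(z:=None))(x\<mapsto>y)))"
proof (cases j)
  case 0
  then have "dom \<psi> = {}" using ps Theta_finite_dom[OF ps] by (auto simp: Theta_def)
  then show ?thesis using 0 by (simp add: Dop_def Dstar_def)
next
  case (Suc j')
  have "Dstar n j (Dop n j G) \<psi> = (\<Sum>z\<in>dom \<psi>. Dop n (Suc j') G (\<psi>(z:=None)))"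
    using Dstar_eq[of \<psi> n j'] ps Suc by simp
  also have "\<dots> = (\<Sum>z\<in>dom \<psi>. \<Sum>x\<in>{1..n} - (dom \<psi> - {z}). \<Sum>y\<in>UNIV. G ((\<psi>(z:=None))(x\<mapsto>y)))"
  proof (rule sum.cong)
    fix z assume z: "z \<in> dom \<psi>"
    have "\<psi>(z:=None) \<in> Theta n j'" using Theta_del[of \<psi> n j' z] ps Suc z by simp
    from Dop_eq[OF this] show "Dop n (Suc j') G (\<psi>(z:=None)) =
      (\<Sum>x\<in>{1..n} - (dom \<psi> - {z}). \<Sum>y\<in>UNIV. G ((\<psi>(z:=None))(x\<mapsto>y)))" by simp
  qed simp
  finally show ?thesis .
qed

lemma COMM:
  fixes G :: "(nat \<rightharpoonup> 'y::finite) \<Rightarrow> complex"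
  assumes ps: "\<psi> \<in> Theta n j" and ep: "EP n j c0 G"
  shows "Dop n (Suc j) (Dstar n (Suc j) G) \<psi> + of_nat (c0 * card (UNIV :: 'y set)) * G \<psi>
       = Dstar n j (Dop n j G) \<psi> + of_nat ((n - j) * card (UNIV :: 'y set)) * G \<psi>"
proof -
  let ?X = "{1..n} - dom \<psi>"
  let ?N = "card (UNIV :: 'y set)"
  have fin: "finite (dom \<psi>)" using Theta_finite_dom[OF ps] .
  have subn: "dom \<psi> \<subseteq> {1..n}" and cj: "card (dom \<psi>) = j" using ps by (auto simp: Theta_def)
  have cardX: "card ?X = n - j" using card_Diff_subset[OF fin subn] cj by simp
  define T where "T = (\<Sum>x\<in>?X. \<Sum>y\<in>UNIV. \<Sum>z\<in>dom \<psi>. G ((\<psi>(z:=None))(x\<mapsto>y)))"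
  have L: "Dop n (Suc j) (Dstar n (Suc j) G) \<psi> = of_nat ((n - j) * ?N) * G \<psi> + T"
  proof -
    have "Dop n (Suc j) (Dstar n (Suc j) G) \<psi> = (\<Sum>x\<in>?X. \<Sum>y\<in>UNIV. Dstar n (Suc j) G (\<psi>(x\<mapsto>y)))"
      by (rule Dop_eq[OF ps])
    also have "\<dots> = (\<Sum>x\<in>?X. \<Sum>y\<in>UNIV. G \<psi> + (\<Sum>z\<in>dom \<psi>. G ((\<psi>(z:=None))(x\<mapsto>y))))"
    proof (intro sum.cong refl)
      fix x y assume x: "x \<in> ?X"
      have xn: "x \<notin> dom \<psi>" using x by simp
      have "Dstar n (Suc j) G (\<psi>(x\<mapsto>y)) = (\<Sum>z\<in>dom (\<psi>(x\<mapsto>y)). G ((\<psi>(x\<mapsto>y))(z:=None)))"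
        by (rule Dstar_eq[OF Theta_add[OF ps x]])
      also have "\<dots> = G ((\<psi>(x\<mapsto>y))(x:=None)) + (\<Sum>z\<in>dom \<psi>. G ((\<psi>(x\<mapsto>y))(z:=None)))"
        using xn fin by simp
      also have "(\<psi>(x\<mapsto>y))(x:=None) = \<psi>" using xn by (auto simp: domIff)
      also have "(\<Sum>z\<in>dom \<psi>. G ((\<psi>(x\<mapsto>y))(z:=None))) = (\<Sum>z\<in>dom \<psi>. G ((\<psi>(z:=None))(x\<mapsto>y)))"
      proof (rule sum.cong)
        fix z assume "z \<in> dom \<psi>" then have "z \<noteq> x" using xn by auto
        then show "G ((\<psi>(x\<mapsto>y))(z:=None)) = G ((\<psi>(z:=None))(x\<mapsto>y))" by (simp add: fun_upd_twist)
      qed simp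
      finally show "Dstar n (Suc j) G (\<psi>(x\<mapsto>y)) = G \<psi> + (\<Sum>z\<in>dom \<psi>. G ((\<psi>(z:=None))(x\<mapsto>y)))" .
    qed
    also have "\<dots> = of_nat (card ?X * ?N) * G \<psi> + T"
      by (simp add: sum.distrib T_def)
    finally show ?thesis using cardX by simp
  qed
  have R: "Dstar n j (Dop n j G) \<psi> = of_nat (c0 * ?N) * G \<psi> + T"
  proof -
    have "Dstar n j (Dop n j G) \<psi> =
      (\<Sum>z\<in>dom \<psi>. \<Sum>x\<in>{1..n} - (dom \<psi> - {z}). \<Sum>y\<in>UNIV. G ((\<psi>(z:=None))(x\<mapsto>y)))"
      by (rule DSD[OF ps])
    also have "\<dots> = (\<Sum>z\<in>dom \<psi>. (\<Sum>y\<in>UNIV. G (\<psi>(z\<mapsto>y))) + (\<Sum>x\<in>?X. \<Sum>y\<in>UNIV. G ((\<psi>(z:=None))(x\<mapsto>y))))"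
    proof (rule sum.cong)
      fix z assume z: "z \<in> dom \<psi>"
      have e: "{1..n} - (dom \<psi> - {z}) = insert z ?X" using z subn by auto
      have "z \<notin> ?X" using z by simp
      then show "(\<Sum>x\<in>{1..n} - (dom \<psi> - {z}). \<Sum>y\<in>UNIV. G ((\<psi>(z:=None))(x\<mapsto>y))) =
        (\<Sum>y\<in>UNIV. G (\<psi>(z\<mapsto>y))) + (\<Sum>x\<in>?X. \<Sum>y\<in>UNIV. G ((\<psi>(z:=None))(x\<mapsto>y)))"
        unfolding e by simp
    qed simp
    also have "\<dots> = (\<Sum>z\<in>dom \<psi>. \<Sum>y\<in>UNIV. G (\<psi>(z\<mapsto>y))) + (\<Sum>z\<in>dom \<psi>. \<Sum>x\<in>?X. \<Sum>y\<in>UNIV. G ((\<psi>(z:=None))(x\<mapsto>y)))"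
      by (simp add: sum.distrib)
    also have "(\<Sum>z\<in>dom \<psi>. \<Sum>y\<in>UNIV. G (\<psi>(z\<mapsto>y))) = of_nat (c0 * ?N) * G \<psi>"
      using ep ps by (simp add: EP_def)
    also have "(\<Sum>z\<in>dom \<psi>. \<Sum>x\<in>?X. \<Sum>y\<in>UNIV. G ((\<psi>(z:=None))(x\<mapsto>y))) = T"
      unfolding T_def
    proof -
      have "(\<Sum>z\<in>dom \<psi>. \<Sum>x\<in>?X. \<Sum>y\<in>UNIV. G ((\<psi>(z:=None))(x\<mapsto>y))) =
        (\<Sum>x\<in>?X. \<Sum>z\<in>dom \<psi>. \<Sum>y\<in>UNIV. G ((\<psi>(z:=None))(x\<mapsto>y)))" by (rule sum.swap)
      also have "\<dots> = (\<Sum>x\<in>?X. \<Sum>y\<in>UNIV. \<Sum>z\<in>dom \<psi>. G ((\<psi>(z:=None))(x\<mapsto>y)))"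
        by (intro sum.cong refl sum.swap)
      finally show "(\<Sum>z\<in>dom \<psi>. \<Sum>x\<in>?X. \<Sum>y\<in>UNIV. G ((\<psi>(z:=None))(x\<mapsto>y))) =
        (\<Sum>x\<in>?X. \<Sum>y\<in>UNIV. \<Sum>z\<in>dom \<psi>. G ((\<psi>(z:=None))(x\<mapsto>y)))" .
    qed
    finally show ?thesis .
  qed
  show ?thesis using L R by (simp add: algebra_simps)
qed

lemma sum_offdiag_swap:
  assumes "finite D"
  shows "(\<Sum>z\<in>D. \<Sum>w\<in>D - {z}. f z w) = (\<Sum>w\<in>D. \<Sum>z\<in>D - {w}. f z w)"
proof -
  have e: "\<And>z. D - {z} = {w\<in>D. w \<noteq> z}" by auto
  have "(\<Sum>z\<in>D. \<Sum>w\<in>D - {z}. f z w) = (\<Sum>z\<in>D. \<Sum>w\<in>D. if w \<noteq> z then f z w else 0)"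
    unfolding e using assms by (simp add: sum.inter_filter)
  also have "\<dots> = (\<Sum>w\<in>D. \<Sum>z\<in>D. if w \<noteq> z then f z w else 0)" by (rule sum.swap)
  also have "\<dots> = (\<Sum>w\<in>D. \<Sum>z\<in>D - {w}. f z w)"
    unfolding e using assms by (simp add: sum.inter_filter eq_commute)
  finally show ?thesis .
qed

lemma EP_step:
  fixes G :: "(nat \<rightharpoonup> 'y::finite) \<Rightarrow> complex"
  assumes ep: "EP n j c0 G"
  shows "EP n (Suc j) (Suc c0) (Dstar n (Suc j) G)"
  unfolding EP_def
proof
  fix \<theta> :: "nat \<rightharpoonup> 'y" assume th: "\<theta> \<in> Theta n (Suc j)"
  let ?N = "card (UNIV :: 'y set)"
  have fin: "finite (dom \<theta>)" using Theta_finite_dom[OF th] .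
  have "(\<Sum>z\<in>dom \<theta>. \<Sum>y\<in>UNIV. Dstar n (Suc j) G (\<theta>(z\<mapsto>y))) =
     (\<Sum>z\<in>dom \<theta>. \<Sum>y\<in>UNIV. G (\<theta>(z:=None)) + (\<Sum>w\<in>dom \<theta> - {z}. G ((\<theta>(w:=None))(z\<mapsto>y))))"
  proof (intro sum.cong refl)
    fix z y assume z: "z \<in> dom \<theta>"
    have "Dstar n (Suc j) G (\<theta>(z\<mapsto>y)) = (\<Sum>w\<in>dom (\<theta>(z\<mapsto>y)). G ((\<theta>(z\<mapsto>y))(w:=None)))"
      by (rule Dstar_eq[OF Theta_upd[OF th z]])
    also have "dom (\<theta>(z\<mapsto>y)) = dom \<theta>" using z by auto
    also have "(\<Sum>w\<in>dom \<theta>. G ((\<theta>(z\<mapsto>y))(w:=None))) =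
       G ((\<theta>(z\<mapsto>y))(z:=None)) + (\<Sum>w\<in>dom \<theta> - {z}. G ((\<theta>(z\<mapsto>y))(w:=None)))"
      using z fin by (simp add: sum.remove)
    also have "(\<theta>(z\<mapsto>y))(z:=None) = \<theta>(z:=None)" by simp
    also have "(\<Sum>w\<in>dom \<theta> - {z}. G ((\<theta>(z\<mapsto>y))(w:=None))) = (\<Sum>w\<in>dom \<theta> - {z}. G ((\<theta>(w:=None))(z\<mapsto>y)))"
      by (intro sum.cong refl) (simp add: fun_upd_twist)
    finally show "Dstar n (Suc j) G (\<theta>(z\<mapsto>y)) = G (\<theta>(z:=None)) + (\<Sum>w\<in>dom \<theta> - {z}. G ((\<theta>(w:=None))(z\<mapsto>y)))" .
  qed
  also have "\<dots> = of_nat ?N * (\<Sum>z\<in>dom \<theta>. G (\<theta>(z:=None))) +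
      (\<Sum>z\<in>dom \<theta>. \<Sum>w\<in>dom \<theta> - {z}. \<Sum>y\<in>UNIV. G ((\<theta>(w:=None))(z\<mapsto>y)))"
    by (simp add: sum.distrib sum_distrib_left sum.swap[of _ UNIV])
  also have "(\<Sum>z\<in>dom \<theta>. \<Sum>w\<in>dom \<theta> - {z}. \<Sum>y\<in>UNIV. G ((\<theta>(w:=None))(z\<mapsto>y))) =
      (\<Sum>w\<in>dom \<theta>. \<Sum>z\<in>dom \<theta> - {w}. \<Sum>y\<in>UNIV. G ((\<theta>(w:=None))(z\<mapsto>y)))"
    by (rule sum_offdiag_swap[OF fin])
  also have "\<dots> = (\<Sum>w\<in>dom \<theta>. of_nat (c0 * ?N) * G (\<theta>(w:=None)))"
  proof (rule sum.cong)
    fix w assume w: "w \<in> dom \<theta>"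
    have t: "\<theta>(w:=None) \<in> Theta n j" by (rule Theta_del[OF th w])
    have "dom (\<theta>(w:=None)) = dom \<theta> - {w}" by simp
    with ep t show "(\<Sum>z\<in>dom \<theta> - {w}. \<Sum>y\<in>UNIV. G ((\<theta>(w:=None))(z\<mapsto>y))) = of_nat (c0 * ?N) * G (\<theta>(w:=None))"
      unfolding EP_def by metis
  qed simp
  also have "\<dots> = of_nat (c0 * ?N) * (\<Sum>w\<in>dom \<theta>. G (\<theta>(w:=None)))"
    by (rule sum_distrib_left[symmetric])
  finally have "(\<Sum>z\<in>dom \<theta>. \<Sum>y\<in>UNIV. Dstar n (Suc j) G (\<theta>(z\<mapsto>y))) =
     of_nat ?N * (\<Sum>w\<in>dom \<theta>. G (\<theta>(w:=None))) + of_nat (c0 * ?N) * (\<Sum>w\<in>dom \<theta>. G (\<theta>(w:=None)))" .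
  also have "\<dots> = of_nat (Suc c0 * ?N) * (\<Sum>w\<in>dom \<theta>. G (\<theta>(w:=None)))"
    by (simp add: algebra_simps)
  also have "(\<Sum>w\<in>dom \<theta>. G (\<theta>(w:=None))) = Dstar n (Suc j) G \<theta>"
    using Dstar_eq[OF th, of G] by simp
  finally show "(\<Sum>z\<in>dom \<theta>. \<Sum>y\<in>UNIV. Dstar n (Suc j) G (\<theta>(z\<mapsto>y))) = of_nat (Suc c0 * ?N) * Dstar n (Suc j) G \<theta>" .
qed

definition mu :: "nat \<Rightarrow> nat \<Rightarrow> nat \<Rightarrow> nat \<Rightarrow> real" where
  "mu n k c0 d = real d * (real n - real k - real c0 - real d + 1)"

lemma Theta_le: "\<psi> \<in> Theta n j \<Longrightarrow> j \<le> n"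
  unfolding Theta_def using card_mono[of "{1..n}"] by fastforce

lemma key_step:
  fixes G :: "(nat \<rightharpoonup> 'y::finite) \<Rightarrow> complex" and r :: real
  assumes epG: "EP n j c G"
    and invG: "\<forall>\<psi>\<in>Theta n j. Dstar n j (Dop n j G) \<psi> = of_real (r * card (UNIV::'y set)) * G \<psi>"
    and ps: "\<psi> \<in> Theta n j"
  shows "Dop n (Suc j) (Dstar n (Suc j) G) \<psi>
     = of_real ((r + real n - real j - real c) * card (UNIV::'y set)) * G \<psi>"
proof -
  let ?N = "card (UNIV::'y set)"
  have jn: "j \<le> n" using Theta_le[OF ps] .
  have "Dop n (Suc j) (Dstar n (Suc j) G) \<psi> + of_nat (c * ?N) * G \<psi>
     = Dstar n j (Dop n j G) \<psi> + of_nat ((n - j) * ?N) * G \<psi>" by (rule COMM[OF ps epG])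
  also have "\<dots> = of_real (r * ?N) * G \<psi> + of_nat ((n - j) * ?N) * G \<psi>"
    using invG ps by simp
  finally have e0: "Dop n (Suc j) (Dstar n (Suc j) G) \<psi> + of_nat (c * ?N) * G \<psi>
     = of_real (r * ?N) * G \<psi> + of_nat ((n - j) * ?N) * G \<psi>" .
  have e: "Dop n (Suc j) (Dstar n (Suc j) G) \<psi> =
     of_real (r * ?N) * G \<psi> + of_nat ((n - j) * ?N) * G \<psi> - of_nat (c * ?N) * G \<psi>"
    by (subst eq_diff_eq) (rule e0)
  also have "\<dots> = (of_real (r * ?N) + of_nat ((n - j) * ?N) - of_nat (c * ?N)) * G \<psi>"
    by (simp only: ring_distribs)
  also have "of_real (r * ?N) + of_nat ((n - j) * ?N) - of_nat (c * ?N)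
      = complex_of_real (r * ?N + real ((n - j) * ?N) - real (c * ?N))"
    by (simp only: of_real_add of_real_diff of_real_of_nat_eq)
  also have "r * ?N + real ((n - j) * ?N) - real (c * ?N) = (r + real n - real j - real c) * ?N"
  proof -
    have "real ((n - j) * ?N) = (real n - real j) * real ?N" using jn by (simp add: of_nat_diff)
    then show ?thesis by (simp add: algebra_simps)
  qed
  finally show ?thesis .
qed

lemma main_inv:
  fixes F :: "(nat \<rightharpoonup> 'y::finite) \<Rightarrow> complex"
  assumes ep: "EP n k c0 F" and d0: "Dop n k F = (\<lambda>_. 0)"
  shows "EP n (k+d) (c0+d) (DstarIter n k d F) \<and>
    (\<forall>\<psi>\<in>Theta n (k+d). Dstar n (k+d) (Dop n (k+d) (DstarIter n k d F)) \<psi>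
       = of_real (mu n k c0 d * card (UNIV::'y set)) * DstarIter n k d F \<psi>)"
proof (induction d)
  case 0
  then show ?case using ep d0 by (simp add: Dstar_def mu_def)
next
  case (Suc d)
  let ?N = "card (UNIV::'y set)"
  let ?G = "DstarIter n k d F"
  let ?j = "k + d"
  have epG: "EP n ?j (c0+d) ?G" and invG: "\<forall>\<psi>\<in>Theta n ?j. Dstar n ?j (Dop n ?j ?G) \<psi>
       = of_real (mu n k c0 d * ?N) * ?G \<psi>" using Suc.IH by auto
  have ep2: "EP n (k + Suc d) (c0 + Suc d) (DstarIter n k (Suc d) F)"
    using EP_step[OF epG] by simp
  have mueq: "mu n k c0 d + real n - real ?j - real (c0 + d) = mu n k c0 (Suc d)"
    by (simp add: mu_def algebra_simps)
  have key: "Dop n (Suc ?j) (Dstar n (Suc ?j) ?G) \<psi> = of_real (mu n k c0 (Suc d) * ?N) * ?G \<psi>"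
    if ps: "\<psi> \<in> Theta n ?j" for \<psi>
    using key_step[OF epG invG ps] unfolding mueq .
  have inv2: "Dstar n (k + Suc d) (Dop n (k + Suc d) (DstarIter n k (Suc d) F)) \<theta>
       = of_real (mu n k c0 (Suc d) * ?N) * DstarIter n k (Suc d) F \<theta>"
    if th: "\<theta> \<in> Theta n (k + Suc d)" for \<theta>
  proof -
    have th': "\<theta> \<in> Theta n (Suc ?j)" using th by simp
    have "Dstar n (Suc ?j) (Dop n (Suc ?j) (Dstar n (Suc ?j) ?G)) \<theta>
      = (\<Sum>\<phi>\<in>{\<phi>\<in>Theta n ?j. \<phi> \<subseteq>\<^sub>m \<theta>}. Dop n (Suc ?j) (Dstar n (Suc ?j) ?G) \<phi>)"
      using th' by (simp add: Dstar_def)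
    also have "\<dots> = (\<Sum>\<phi>\<in>{\<phi>\<in>Theta n ?j. \<phi> \<subseteq>\<^sub>m \<theta>}. of_real (mu n k c0 (Suc d) * ?N) * ?G \<phi>)"
      using key by (intro sum.cong) auto
    also have "\<dots> = of_real (mu n k c0 (Suc d) * ?N) * Dstar n (Suc ?j) ?G \<theta>"
      using th' by (simp add: Dstar_def sum_distrib_left)
    finally show ?thesis by simp
  qed
  show ?case using ep2 inv2 by blast
qed

lemma adjoint:
  fixes G H :: "(nat \<rightharpoonup> 'y::finite) \<Rightarrow> complex"
  shows "(\<Sum>\<theta>\<in>Theta n (Suc j). Dstar n (Suc j) G \<theta> * cnj (H \<theta>))
       = (\<Sum>\<phi>\<in>Theta n j. G \<phi> * cnj (Dop n (Suc j) H \<phi>))"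
proof -
  have "(\<Sum>\<theta>\<in>Theta n (Suc j). Dstar n (Suc j) G \<theta> * cnj (H \<theta>))
     = (\<Sum>\<theta>\<in>Theta n (Suc j). \<Sum>\<phi>\<in>Theta n j. if \<phi> \<subseteq>\<^sub>m \<theta> then G \<phi> * cnj (H \<theta>) else 0)"
    by (simp add: Dstar_def sum.inter_filter[OF finite_Theta] sum_distrib_right) (intro sum.cong refl; simp)
  also have "\<dots> = (\<Sum>\<phi>\<in>Theta n j. \<Sum>\<theta>\<in>Theta n (Suc j). if \<phi> \<subseteq>\<^sub>m \<theta> then G \<phi> * cnj (H \<theta>) else 0)"
    by (rule sum.swap)
  also have "\<dots> = (\<Sum>\<phi>\<in>Theta n j. G \<phi> * cnj (Dop n (Suc j) H \<phi>))"
    by (simp add: Dop_def sum.inter_filter[OF finite_Theta] sum_distrib_left cnj_sum) (intro sum.cong refl; simp)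
  finally show ?thesis .
qed

lemma normsq_c: "complex_of_real (normsq n j G) = (\<Sum>\<theta>\<in>Theta n j. G \<theta> * cnj (G \<theta>))"
  unfolding normsq_def of_real_sum by (rule sum.cong[OF refl], rule complex_norm_square)

lemma norm_step:
  fixes G :: "(nat \<rightharpoonup> 'y::finite) \<Rightarrow> complex"
  assumes "\<forall>\<psi>\<in>Theta n j. Dop n (Suc j) (Dstar n (Suc j) G) \<psi> = of_real r * G \<psi>"
  shows "normsq n (Suc j) (Dstar n (Suc j) G) = r * normsq n j G"
proof -
  have "complex_of_real (normsq n (Suc j) (Dstar n (Suc j) G))
     = (\<Sum>\<phi>\<in>Theta n j. G \<phi> * cnj (Dop n (Suc j) (Dstar n (Suc j) G) \<phi>))"
    unfolding normsq_c by (rule adjoint)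
  also have "\<dots> = (\<Sum>\<phi>\<in>Theta n j. of_real r * (G \<phi> * cnj (G \<phi>)))"
    using assms by (intro sum.cong refl) (simp add: algebra_simps)
  also have "\<dots> = complex_of_real (r * normsq n j G)"
    by (simp add: normsq_c sum_distrib_left)
  finally show ?thesis using of_real_eq_iff by blast
qed

lemma norm_iter:
  fixes F :: "(nat \<rightharpoonup> 'y::finite) \<Rightarrow> complex"
  assumes ep: "EP n k c0 F" and d0: "Dop n k F = (\<lambda>_. 0)"
  shows "normsq n (k+d) (DstarIter n k d F) =
     (\<Prod>i<d. mu n k c0 (Suc i) * card (UNIV::'y set)) * normsq n k F"
proof (induction d)
  case 0
  then show ?case by simp
next
  case (Suc d)
  let ?N = "card (UNIV::'y set)"
  let ?G = "DstarIter n k d F"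
  have mi: "EP n (k+d) (c0+d) ?G" "\<forall>\<psi>\<in>Theta n (k+d). Dstar n (k+d) (Dop n (k+d) ?G) \<psi>
       = of_real (mu n k c0 d * ?N) * ?G \<psi>" using main_inv[OF ep d0, of d] by auto
  have mueq: "mu n k c0 d + real n - real (k+d) - real (c0 + d) = mu n k c0 (Suc d)"
    by (simp add: mu_def algebra_simps)
  have "\<forall>\<psi>\<in>Theta n (k+d). Dop n (Suc (k+d)) (Dstar n (Suc (k+d)) ?G) \<psi> = of_real (mu n k c0 (Suc d) * ?N) * ?G \<psi>"
    using key_step[OF mi] unfolding mueq by blast
  from norm_step[OF this] have "normsq n (Suc (k+d)) (Dstar n (Suc (k+d)) ?G) = mu n k c0 (Suc d) * ?N * normsq n (k+d) ?G" .
  then show ?case using Suc.IH by (simp add: algebra_simps)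
qed

lemma maxprin:
  fixes g :: "'y::finite \<Rightarrow> real" and q :: "'y \<Rightarrow> 'y \<Rightarrow> real"
  assumes nn: "\<forall>y y'. q y y' \<ge> 0" and rs: "\<forall>y. (\<Sum>y'\<in>UNIV. q y y') = 1"
    and irr: "\<forall>y y'. (y, y') \<in> {(u, v). q u v > 0}\<^sup>*"
    and harm: "\<And>y. g y = (\<Sum>y'\<in>UNIV. q y y' * g y')"
  shows "g y = g y'"
proof -
  define M where "M = Max (range g)"
  have le: "g x \<le> M" for x unfolding M_def by simp
  have "M \<in> range g" unfolding M_def by (rule Max_in) auto
  then obtain y0 where y0: "g y0 = M" by auto
  have stp: "g b = M" if "g a = M" "q a b > 0" for a b
  proof -
    have "(\<Sum>y'\<in>UNIV. q a y' * (M - g y')) = M * (\<Sum>y'\<in>UNIV. q a y') - (\<Sum>y'\<in>UNIV. q a y' * g y')"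
      by (simp add: algebra_simps sum_subtractf sum_distrib_left)
    also have "\<dots> = 0" using rs harm[of a] that(1) by simp
    finally have "(\<Sum>y'\<in>UNIV. q a y' * (M - g y')) = 0" .
    moreover have "\<forall>y'\<in>UNIV. q a y' * (M - g y') \<ge> 0" using nn le by simp
    ultimately have "q a b * (M - g b) = 0" using sum_nonneg_eq_0_iff[of UNIV "\<lambda>y'. q a y' * (M - g y')"] by simp
    then show ?thesis using that(2) by simp
  qed
  have all: "g z = M" if "(y0, z) \<in> {(u, v). q u v > 0}\<^sup>*" for z
    using that
  proof (induction rule: rtrancl_induct)
    case base then show ?case using y0 .
  next
    case (step b c) then show ?case using stp by auto
  qed
  show ?thesis using all irr by metis
qed

lemma W0_const:
  assumes sq: "stochastic_sym_irred q" and ee: "eigen_enum q m lam" and f: "f \<in> W q lam 0"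
  shows "f y = f y'"
proof -
  have l0: "lam 0 = 1" using ee by (simp add: eigen_enum_def)
  have fe: "f y = (\<Sum>y'\<in>UNIV. complex_of_real (q y y') * f y')" for y
    using f l0 unfolding W_def Qop_def by (metis (mono_tags, lifting) mem_Collect_eq mult_1 of_real_1)
  from sq have nn: "\<forall>y y'. q y y' \<ge> 0" and rs: "\<forall>y. (\<Sum>y'\<in>UNIV. q y y') = 1"
    and irr: "\<forall>y y'. (y, y') \<in> {(u, v). q u v > 0}\<^sup>*" by (auto simp: stochastic_sym_irred_def)
  have hr: "Re (f y) = (\<Sum>y'\<in>UNIV. q y y' * Re (f y'))" for y
    by (subst fe) (simp add: Re_sum)
  have hi: "Im (f y) = (\<Sum>y'\<in>UNIV. q y y' * Im (f y'))" for y
    by (subst fe) (simp add: Im_sum)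
  have "Re (f y) = Re (f y')" by (rule maxprin[OF nn rs irr hr])
  moreover have "Im (f y) = Im (f y')" by (rule maxprin[OF nn rs irr hi])
  ultimately show ?thesis by (simp add: complex_eq_iff)
qed

lemma Wi_sum:
  assumes sq: "stochastic_sym_irred q" and ee: "eigen_enum q m lam" and i: "0 < i" "i \<le> m"
    and f: "f \<in> W q lam i"
  shows "(\<Sum>y\<in>UNIV. f y) = 0"
proof -
  have l0: "lam 0 = 1" and inj: "inj_on lam {..m}" using ee by (auto simp: eigen_enum_def)
  have li: "lam i \<noteq> 1" using inj i l0 unfolding inj_on_def by (metis atMost_iff le0 less_irrefl)
  from sq have rs: "\<forall>y. (\<Sum>y'\<in>UNIV. q y y') = 1" and sym: "\<forall>y y'. q y y' = q y' y"
    by (auto simp: stochastic_sym_irred_def)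
  have cs: "(\<Sum>y\<in>UNIV. q y y') = 1" for y' using rs sym by (metis (no_types) sum.cong)
  have "(\<Sum>y\<in>UNIV. Qop q f y) = (\<Sum>y'\<in>UNIV. (\<Sum>y\<in>UNIV. complex_of_real (q y y')) * f y')"
    unfolding Qop_def by (subst sum.swap) (simp add: sum_distrib_right)
  also have "\<dots> = (\<Sum>y'\<in>UNIV. f y')"
  proof (rule sum.cong[OF refl])
    fix y'
    have "(\<Sum>y\<in>UNIV. complex_of_real (q y y')) = complex_of_real (\<Sum>y\<in>UNIV. q y y')" by simp
    then show "(\<Sum>y\<in>UNIV. complex_of_real (q y y')) * f y' = f y'" using cs by simp
  qed
  finally have a: "(\<Sum>y\<in>UNIV. Qop q f y) = (\<Sum>y\<in>UNIV. f y)" .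
  have "(\<Sum>y\<in>UNIV. Qop q f y) = complex_of_real (lam i) * (\<Sum>y\<in>UNIV. f y)"
    using f unfolding W_def by (simp add: sum_distrib_left)
  with a have "(complex_of_real (lam i) - 1) * (\<Sum>y\<in>UNIV. f y) = 0" by (simp add: algebra_simps)
  moreover have "complex_of_real (lam i) - 1 \<noteq> 0" using li
    by (metis eq_iff_diff_eq_0 of_real_1 of_real_eq_iff)
  ultimately show ?thesis by simp
qed

lemma fund_EP:
  fixes G :: "(nat \<rightharpoonup> 'y::finite) \<Rightarrow> complex"
  assumes sq: "stochastic_sym_irred q" and ee: "eigen_enum q m lam"
    and fu: "fundamental q m lam c A G"
  shows "EP n k (c 0) G"
proof -
  let ?N = "card (UNIV::'y set)"
  obtain Fj ii where h1: "\<forall>j\<in>A. ii j \<le> m \<and> Fj j \<in> W q lam (ii j)"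
    and h2: "\<forall>i\<le>m. card {j\<in>A. ii j = i} = c i"
    and Gd: "G = (\<lambda>\<theta>. if dom \<theta> = A then (\<Prod>j\<in>A. Fj j (the (\<theta> j))) else 0)"
    using fu unfolding fundamental_def by blast
  show ?thesis unfolding EP_def
  proof
    fix \<psi> :: "nat \<rightharpoonup> 'y" assume ps: "\<psi> \<in> Theta n k"
    show "(\<Sum>z\<in>dom \<psi>. \<Sum>y\<in>UNIV. G (\<psi>(z\<mapsto>y))) = of_nat (c 0 * ?N) * G \<psi>"
    proof (cases "dom \<psi> = A")
      case True
      have finA: "finite A" using Theta_finite_dom[OF ps] True by simp
      let ?P = "\<lambda>z. \<Prod>j\<in>A-{z}. Fj j (the (\<psi> j))"
      have Gp: "G \<psi> = Fj z (the (\<psi> z)) * ?P z" if z: "z \<in> A" for z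
        using True finA z by (simp add: Gd prod.remove)
      have inner: "(\<Sum>y\<in>UNIV. G (\<psi>(z\<mapsto>y))) = (if ii z = 0 then of_nat ?N * G \<psi> else 0)"
        if z: "z \<in> A" for z
      proof -
        have "G (\<psi>(z\<mapsto>y)) = Fj z y * ?P z" for y
        proof -
          have d: "dom (\<psi>(z\<mapsto>y)) = A" using True z by auto
          have "G (\<psi>(z\<mapsto>y)) = (\<Prod>j\<in>A. Fj j (the ((\<psi>(z\<mapsto>y)) j)))" using d by (simp add: Gd)
          also have "\<dots> = Fj z y * (\<Prod>j\<in>A-{z}. Fj j (the ((\<psi>(z\<mapsto>y)) j)))"
            using finA z by (simp add: prod.remove)
          also have "(\<Prod>j\<in>A-{z}. Fj j (the ((\<psi>(z\<mapsto>y)) j))) = ?P z"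
            by (intro prod.cong refl) auto
          finally show ?thesis .
        qed
        then have "(\<Sum>y\<in>UNIV. G (\<psi>(z\<mapsto>y))) = (\<Sum>y\<in>UNIV. Fj z y) * ?P z"
          by (simp add: sum_distrib_right)
        also have "\<dots> = (if ii z = 0 then of_nat ?N * G \<psi> else 0)"
        proof (cases "ii z = 0")
          case True
          then have "Fj z \<in> W q lam 0" using h1 z by auto
          then have "Fj z y = Fj z (the (\<psi> z))" for y by (rule W0_const[OF sq ee])
          then have "(\<Sum>y\<in>UNIV. Fj z y) = (\<Sum>y\<in>(UNIV::'y set). Fj z (the (\<psi> z)))" by (intro sum.cong) auto
          then have "(\<Sum>y\<in>UNIV. Fj z y) = of_nat ?N * Fj z (the (\<psi> z))" by simp
          then show ?thesis using True Gp[OF z] by simp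
        next
          case False
          then have "(\<Sum>y\<in>UNIV. Fj z y) = 0" using h1 z Wi_sum[OF sq ee, of "ii z" "Fj z"] by auto
          then show ?thesis using False by simp
        qed
        finally show ?thesis .
      qed
      have "(\<Sum>z\<in>dom \<psi>. \<Sum>y\<in>UNIV. G (\<psi>(z\<mapsto>y))) = (\<Sum>z\<in>A. if ii z = 0 then of_nat ?N * G \<psi> else 0)"
        using inner True by simp
      also have "\<dots> = (\<Sum>z\<in>{z\<in>A. ii z = 0}. of_nat ?N * G \<psi>)"
        by (rule sum.inter_filter[symmetric, OF finA])
      also have "\<dots> = of_nat (card {z\<in>A. ii z = 0}) * (of_nat ?N * G \<psi>)" by simp
      also have "card {z\<in>A. ii z = 0} = c 0" using h2 by simp
      finally show ?thesis by (simp only: of_nat_mult mult.assoc)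
    next
      case False
      have "G (\<psi>(z\<mapsto>y)) = 0" if "z \<in> dom \<psi>" for z y
      proof -
        have "dom (\<psi>(z\<mapsto>y)) = dom \<psi>" using that by auto
        then show ?thesis using False by (simp add: Gd)
      qed
      moreover have "G \<psi> = 0" using False by (simp add: Gd)
      ultimately show ?thesis by simp
    qed
  qed
qed

lemma Pkc_props:
  fixes F :: "(nat \<rightharpoonup> 'y::finite) \<Rightarrow> complex"
  assumes sq: "stochastic_sym_irred q" and ee: "eigen_enum q m lam"
    and F: "F \<in> Pkc q m lam n k c"
  shows "EP n k (c 0) F \<and> (\<forall>\<theta>. \<theta> \<notin> Theta n k \<longrightarrow> F \<theta> = 0)"
proof -
  let ?N = "card (UNIV::'y set)"
  obtain T u where T: "finite T" "T \<subseteq> (\<Union>A\<in>{A. A \<subseteq> {1..n} \<and> card A = k}. {F. fundamental q m lam c A F})"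
    and Fd: "F = (\<lambda>x. \<Sum>G\<in>T. u G * G x)"
    using F unfolding Pkc_def cspan_def by blast
  have fA: "\<exists>A. A \<subseteq> {1..n} \<and> card A = k \<and> fundamental q m lam c A G" if "G \<in> T" for G
  proof -
    have "G \<in> (\<Union>A\<in>{A. A \<subseteq> {1..n} \<and> card A = k}. {F. fundamental q m lam c A F})"
      using T(2) that by (rule subsetD)
    then show ?thesis by simp
  qed
  have epG: "EP n k (c 0) G" if "G \<in> T" for G
    using fA[OF that] fund_EP[OF sq ee] by metis
  have vanG: "G \<theta> = 0" if G: "G \<in> T" and th: "\<theta> \<notin> Theta n k" for G \<theta>
  proof -
    obtain A where A: "A \<subseteq> {1..n}" "card A = k" "fundamental q m lam c A G" using fA[OF G] by blast
    then obtain Fj ii where Gd: "G = (\<lambda>\<theta>. if dom \<theta> = A then (\<Prod>j\<in>A. Fj j (the (\<theta> j))) else 0)"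
      unfolding fundamental_def by blast
    have "dom \<theta> \<noteq> A" using th A by (auto simp: Theta_def)
    then show ?thesis by (simp add: Gd)
  qed
  have "EP n k (c 0) F" unfolding EP_def
  proof
    fix \<psi> :: "nat \<rightharpoonup> 'y" assume ps: "\<psi> \<in> Theta n k"
    have gi: "(\<Sum>z\<in>dom \<psi>. \<Sum>y\<in>UNIV. G (\<psi>(z\<mapsto>y))) = of_nat (c 0 * ?N) * G \<psi>" if "G \<in> T" for G
      using epG[OF that] ps unfolding EP_def by blast
    have "(\<Sum>z\<in>dom \<psi>. \<Sum>y\<in>UNIV. F (\<psi>(z\<mapsto>y))) = (\<Sum>z\<in>dom \<psi>. \<Sum>y\<in>UNIV. \<Sum>G\<in>T. u G * G (\<psi>(z\<mapsto>y)))"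
      unfolding Fd ..
    also have "\<dots> = (\<Sum>z\<in>dom \<psi>. \<Sum>G\<in>T. \<Sum>y\<in>UNIV. u G * G (\<psi>(z\<mapsto>y)))"
      by (intro sum.cong refl sum.swap)
    also have "\<dots> = (\<Sum>G\<in>T. \<Sum>z\<in>dom \<psi>. \<Sum>y\<in>UNIV. u G * G (\<psi>(z\<mapsto>y)))"
      by (rule sum.swap)
    also have "\<dots> = (\<Sum>G\<in>T. u G * (\<Sum>z\<in>dom \<psi>. \<Sum>y\<in>UNIV. G (\<psi>(z\<mapsto>y))))"
      by (simp only: sum_distrib_left)
    also have "\<dots> = (\<Sum>G\<in>T. u G * (of_nat (c 0 * ?N) * G \<psi>))"
      by (intro sum.cong refl) (simp only: gi)
    also have "\<dots> = of_nat (c 0 * ?N) * (\<Sum>G\<in>T. u G * G \<psi>)"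
      by (simp only: sum_distrib_left mult.left_commute)
    also have "(\<Sum>G\<in>T. u G * G \<psi>) = F \<psi>" unfolding Fd ..
    finally show "(\<Sum>z\<in>dom \<psi>. \<Sum>y\<in>UNIV. F (\<psi>(z\<mapsto>y))) = of_nat (c 0 * ?N) * F \<psi>" .
  qed
  moreover have "\<forall>\<theta>. \<theta> \<notin> Theta n k \<longrightarrow> F \<theta> = 0"
  proof (intro allI impI)
    fix \<theta> :: "nat \<rightharpoonup> 'y" assume th: "\<theta> \<notin> Theta n k"
    show "F \<theta> = 0" unfolding Fd using vanG[OF _ th] by (intro sum.neutral) simp
  qed
  ultimately show ?thesis by blast
qed

lemma EP_diff:
  assumes "EP n k c F1" "EP n k c F2"
  shows "EP n k c (\<lambda>\<theta>. F1 \<theta> - F2 \<theta>)"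
  using assms unfolding EP_def by (simp add: sum_subtractf algebra_simps)

lemma Dop_diff: "Dop n k (\<lambda>\<theta>. F1 \<theta> - F2 \<theta>) = (\<lambda>\<phi>. Dop n k F1 \<phi> - Dop n k F2 \<phi>)"
  by (auto simp: Dop_def sum_subtractf)

lemma Dstar_diff: "Dstar n k (\<lambda>\<theta>. F1 \<theta> - F2 \<theta>) = (\<lambda>\<phi>. Dstar n k F1 \<phi> - Dstar n k F2 \<phi>)"
  by (auto simp: Dstar_def sum_subtractf)

lemma DstarIter_diff: "DstarIter n k d (\<lambda>\<theta>. F1 \<theta> - F2 \<theta>) = (\<lambda>\<phi>. DstarIter n k d F1 \<phi> - DstarIter n k d F2 \<phi>)"
  by (induction d) (simp_all add: Dstar_diff)

lemma PP_iter: "PP q m lam n d c k = DstarIter n k d ` PP q m lam n 0 (type_shift d c) k"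
proof (induction d arbitrary: c)
  case 0
  then show ?case by (simp add: type_shift_def)
next
  case (Suc d)
  have sh: "type_shift d (type_shift 1 c) = type_shift (Suc d) c"
    by (simp add: type_shift_def)
  show ?case using Suc.IH[of "type_shift 1 c"] unfolding sh by (simp add: image_image)
qed

lemma prod_fact:
  "D \<le> M \<Longrightarrow> (\<Prod>i<D. real (Suc i) * (real M - real i)) * fact (M - D) = fact M * (fact D :: real)"
proof (induction D)
  case 0
  then show ?case by simp
next
  case (Suc D)
  have e: "M - D = Suc (M - Suc D)" using Suc.prems by simp
  have f: "(fact (M - D) :: real) = real (M - D) * fact (M - Suc D)" unfolding e by simp
  have "(\<Prod>i<Suc D. real (Suc i) * (real M - real i)) * fact (M - Suc D)
     = (\<Prod>i<D. real (Suc i) * (real M - real i)) * (real (Suc D) * (real M - real D)) * fact (M - Suc D)"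
    by simp
  also have "real M - real D = real (M - D)" using Suc.prems by (simp add: of_nat_diff)
  also have "(\<Prod>i<D. real (Suc i) * (real M - real i)) * (real (Suc D) * real (M - D)) * fact (M - Suc D)
     = ((\<Prod>i<D. real (Suc i) * (real M - real i)) * fact (M - D)) * real (Suc D)"
    unfolding f by (simp add: algebra_simps)
  also have "\<dots> = fact M * fact (Suc D)" using Suc by (simp add: algebra_simps)
  finally show ?case .
qed

theorem proposition7p11:
  fixes q :: "'y::finite \<Rightarrow> 'y \<Rightarrow> real"
    and m n h k :: nat and lam :: "nat \<Rightarrow> real" and a :: "nat \<Rightarrow> nat"
  assumes "stochastic_sym_irred q"
    and "eigen_enum q m lam"
    and "type_size m a = h"
    and "type_ell m a \<le> k" and "2 * k \<le> n + type_ell m a"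
    and "k \<le> h" and "h + k \<le> n + type_ell m a"
  shows "(\<forall>F\<in>Pspace q m lam n k (type_shift (h - k) a) k.
            normsq n h (DstarIter n k (h - k) F) =
              real (fact (n + type_ell m a - 2 * k)) * real (fact (h - k))
                / real (fact (n + type_ell m a - k - h))
                * real (card (UNIV :: 'y set)) ^ (h - k) * normsq n k F)
       \<and> bij_betw (DstarIter n k (h - k))
            (Pspace q m lam n k (type_shift (h - k) a) k) (Pspace q m lam n h a k)"
proof -
  note sq = assms(1) and ee = assms(2)
  define l where "l = type_ell m a"
  define c' where "c' = type_shift (h - k) a"
  define D where "D = h - k"
  define M where "M = n + l - 2 * k"
  define N where "N = card (UNIV :: 'y set)"
  have lk: "l \<le> k" and kM: "2 * k \<le> n + l" and hk: "h + k \<le> n + l" using assms(4,5,7) l_def by auto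
  have DM: "D \<le> M" using hk assms(6) unfolding D_def M_def by simp
  have sz: "type_size m a = a 0 + l"
  proof -
    have "{..m} = insert 0 {1..m}" by auto
    then show ?thesis unfolding type_size_def l_def type_ell_def by simp
  qed
  have c0: "c' 0 = k - l" using sz assms(3,6) unfolding c'_def type_shift_def by simp
  have Mr: "real n - real k - real (c' 0) = real M"
    using c0 lk kM unfolding M_def by (simp add: of_nat_diff)
  have PS0: "Pspace q m lam n k c' k = {F \<in> Pkc q m lam n k c'. Dop n k F = (\<lambda>_. 0)}"
    by (simp add: Pspace_def)
  have PSh: "Pspace q m lam n h a k = DstarIter n k D ` Pspace q m lam n k c' k"
    unfolding Pspace_def c'_def D_def by (simp add: PP_iter[of q m lam n "h - k" a k])
  have Npos: "N > 0" unfolding N_def by (simp add: card_gt_0_iff)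
  define C where "C = real (fact M) * real (fact D) / real (fact (M - D)) * real N ^ D"
  have Cpos: "C > 0" using Npos unfolding C_def by simp
  have normF: "normsq n h (DstarIter n k D F) = C * normsq n k F"
    if F: "F \<in> Pspace q m lam n k c' k" for F
  proof -
    from F PS0 have Fp: "F \<in> Pkc q m lam n k c'" and d0: "Dop n k F = (\<lambda>_. 0)" by auto
    have ep: "EP n k (c' 0) F" using Pkc_props[OF sq ee Fp] by blast
    have "normsq n (k + D) (DstarIter n k D F) = (\<Prod>i<D. mu n k (c' 0) (Suc i) * N) * normsq n k F"
      using norm_iter[OF ep d0, of D] unfolding N_def .
    moreover have "k + D = h" using assms(6) D_def by simp
    moreover have "(\<Prod>i<D. mu n k (c' 0) (Suc i) * N) = C"
    proof -
      have "(\<Prod>i<D. mu n k (c' 0) (Suc i) * N) = (\<Prod>i<D. real (Suc i) * (real M - real i)) * real N ^ D"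
      proof -
        have "mu n k (c' 0) (Suc i) = real (Suc i) * (real M - real i)" for i
        proof -
          have "real n - real k - real (c' 0) - real (Suc i) + 1 = real M - real i" using Mr by simp
          then show ?thesis unfolding mu_def by simp
        qed
        then show ?thesis by (simp add: prod.distrib)
      qed
      also have "(\<Prod>i<D. real (Suc i) * (real M - real i)) = real (fact M) * real (fact D) / real (fact (M - D))"
        using prod_fact[OF DM] by (simp add: field_simps)
      finally show ?thesis unfolding C_def .
    qed
    ultimately show ?thesis by simp
  qed
  have inj: "inj_on (DstarIter n k D) (Pspace q m lam n k c' k)"
  proof (rule inj_onI)
    fix F1 F2 assume F1: "F1 \<in> Pspace q m lam n k c' k" and F2: "F2 \<in> Pspace q m lam n k c' k"
      and eq: "DstarIter n k D F1 = DstarIter n k D F2"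
    from F1 PS0 have F1p: "F1 \<in> Pkc q m lam n k c'" and d1: "Dop n k F1 = (\<lambda>_. 0)" by auto
    from F2 PS0 have F2p: "F2 \<in> Pkc q m lam n k c'" and d2: "Dop n k F2 = (\<lambda>_. 0)" by auto
    note p1 = Pkc_props[OF sq ee F1p] and p2 = Pkc_props[OF sq ee F2p]
    define F where "F = (\<lambda>\<theta>. F1 \<theta> - F2 \<theta>)"
    have ep: "EP n k (c' 0) F" unfolding F_def using EP_diff p1 p2 by blast
    have d0: "Dop n k F = (\<lambda>_. 0)" unfolding F_def Dop_diff d1 d2 by simp
    have z: "DstarIter n k D F = (\<lambda>_. 0)" unfolding F_def DstarIter_diff eq by simp
    have "normsq n (k + D) (DstarIter n k D F) = (\<Prod>i<D. mu n k (c' 0) (Suc i) * N) * normsq n k F"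
      using norm_iter[OF ep d0, of D] unfolding N_def .
    moreover have "(\<Prod>i<D. mu n k (c' 0) (Suc i) * N) \<noteq> 0"
    proof -
      have "mu n k (c' 0) (Suc i) > 0" if "i < D" for i
        using that DM unfolding mu_def Mr by simp
      then show ?thesis using Npos by (auto simp: prod_zero_iff) (metis less_irrefl)
    qed
    moreover have "normsq n (k + D) (DstarIter n k D F) = 0" unfolding z normsq_def by simp
    ultimately have "normsq n k F = 0" by simp
    then have "\<forall>\<theta>\<in>Theta n k. (cmod (F \<theta>))\<^sup>2 = 0"
      unfolding normsq_def by (subst sum_nonneg_eq_0_iff[symmetric]) (auto simp: finite_Theta)
    then have "\<forall>\<theta>\<in>Theta n k. F1 \<theta> = F2 \<theta>" unfolding F_def by simp
    moreover have "\<forall>\<theta>. \<theta> \<notin> Theta n k \<longrightarrow> F1 \<theta> = F2 \<theta>" using p1 p2 by simp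
    ultimately show "F1 = F2" by blast
  qed
  show ?thesis
  proof
    show "\<forall>F\<in>Pspace q m lam n k (type_shift (h - k) a) k.
            normsq n h (DstarIter n k (h - k) F) =
              real (fact (n + type_ell m a - 2 * k)) * real (fact (h - k))
                / real (fact (n + type_ell m a - k - h))
                * real (card (UNIV :: 'y set)) ^ (h - k) * normsq n k F"
    proof
      fix F assume "F \<in> Pspace q m lam n k (type_shift (h - k) a) k"
      then have "normsq n h (DstarIter n k D F) = C * normsq n k F" using normF unfolding c'_def by blast
      moreover have "n + type_ell m a - k - h = M - D" unfolding M_def D_def l_def using assms(6,7) by simp
      ultimately show "normsq n h (DstarIter n k (h - k) F) =
              real (fact (n + type_ell m a - 2 * k)) * real (fact (h - k))
                / real (fact (n + type_ell m a - k - h))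
                * real (card (UNIV :: 'y set)) ^ (h - k) * normsq n k F"
        unfolding C_def M_def D_def N_def l_def by simp
    qed
    show "bij_betw (DstarIter n k (h - k))
            (Pspace q m lam n k (type_shift (h - k) a) k) (Pspace q m lam n h a k)"
      using inj PSh unfolding c'_def D_def by (simp add: bij_betw_def)
  qed
qed

end
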